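(* Let $G:[0,1]\to\mathbb{R}$ be continuous, let $v>0$ be fixed, and let $\xi<1$ and $\gamma\ge1$. Define for $s>0$ $$J(s):=\int_0^s(v+s-x)^{-\gamma}x^{-\xi}G\Big(\frac{s-x}{v+s-x}\Big)\,\mathrm{d}x.$$ Then as $s\to\infty$, $$J(s)\sim\begin{cases}s^{-\xi}v^{1-\gamma}\int_0^1(1-z)^{\gamma-2}G(z)\,\mathrm{d}z, & \gamma>1,\\ s^{-\xi}(\ln s)\,G(1), & \gamma=1.\end{cases}$$
   Context: $f(s)\sim g(s)$ means $f(s)/g(s)\to1$. *)

theory Defs
  imports "HOL-Analysis.Analysis"
begin

definition Jfun :: "(real \<Rightarrow> real) \<Rightarrow> real \<Rightarrow> real \<Rightarrow> real \<Rightarrow> real \<Rightarrow> real" where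
  "Jfun G v \<xi> \<gamma> s =
     integral {0..s} (\<lambda>x. (v + s - x) powr (-\<gamma>) * x powr (-\<xi>) * G ((s - x) / (v + s - x)))"

end

theory Submission
  imports Defs "HOL-Real_Asymp.Real_Asymp"
begin

lemma psi_le2:
  fixes y \<xi> :: real
  assumes "1/2 \<le> y" "y \<le> 1" "\<xi> < 1"
  shows "y powr (-\<xi>) \<le> 2"
proof (cases "\<xi> \<ge> 0")
  case True
  have "y powr (-\<xi>) \<le> (1/2) powr (-\<xi>)"
    using assms True by (intro powr_mono2') auto
  also have "\<dots> = 2 powr \<xi>" by (simp add: powr_minus_divide powr_divide)
  also have "\<dots> \<le> 2 powr 1" using assms by (intro powr_mono) auto
  finally show ?thesis by simp
next
  case False
  have "y powr (-\<xi>) \<le> 1" using assms False by (intro powr_le1) auto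
  then show ?thesis by simp
qed

lemma psi_lip:
  fixes y \<xi> :: real
  assumes "1/2 \<le> y" "y \<le> 1" "\<xi> < 1"
  shows "\<bar>y powr (-\<xi>) - 1\<bar> \<le> 4 * \<bar>\<xi>\<bar> * (1 - y)"
proof (cases "y = 1")
  case True then show ?thesis by simp
next
  case False
  then have y1: "y < 1" using assms by simp
  have "\<And>t. y \<le> t \<Longrightarrow> t \<le> 1 \<Longrightarrow> DERIV (\<lambda>t. t powr (-\<xi>)) t :> (-\<xi>) * t powr (-\<xi> - 1)"
    using assms by (auto intro!: derivative_eq_intros)
  from MVT2[OF y1 this] obtain z where z: "y < z" "z < 1"
    "1 powr (-\<xi>) - y powr (-\<xi>) = (1 - y) * ((-\<xi>) * z powr (-\<xi> - 1))" by blast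
  have zb: "z powr (-\<xi> - 1) \<le> 4"
  proof (cases "\<xi> \<le> -1")
    case True
    have "z powr (-\<xi> - 1) \<le> 1" using True z assms by (intro powr_le1) auto
    then show ?thesis by simp
  next
    case False
    have "z powr (-\<xi> - 1) \<le> (1/2) powr (-\<xi> - 1)"
      using False z assms by (intro powr_mono2') auto
    also have "\<dots> = 2 powr (\<xi> + 1)" by (simp add: powr_def ln_div algebra_simps)
    also have "\<dots> \<le> 2 powr 2" using assms by (intro powr_mono) auto
    finally show ?thesis by simp
  qed
  have zp: "z powr (-\<xi> - 1) \<ge> 0" by simp
  have "\<bar>y powr (-\<xi>) - 1\<bar> = (1 - y) * (\<bar>\<xi>\<bar> * z powr (-\<xi> - 1))"
    using z(3) y1 by (simp add: abs_mult abs_minus_commute)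
  also have "\<dots> \<le> (1 - y) * (\<bar>\<xi>\<bar> * 4)"
    using y1 zb by (intro mult_left_mono) (auto intro: mult_left_mono)
  finally show ?thesis by (simp add: algebra_simps)
qed

lemma dct_at_top:
  fixes f :: "real \<Rightarrow> real \<Rightarrow> real" and S :: "real set"
  assumes fi: "\<And>s. s \<ge> 1 \<Longrightarrow> f s integrable_on S" and hi: "h integrable_on S"
    and le: "\<And>s x. s \<ge> 1 \<Longrightarrow> x \<in> S \<Longrightarrow> norm (f s x) \<le> h x"
    and conv: "\<And>x. x \<in> S \<Longrightarrow> ((\<lambda>s. f s x) \<longlongrightarrow> g x) at_top"
  shows "((\<lambda>s. integral S (f s)) \<longlongrightarrow> integral S g) at_top"
proof (rule tendsto_at_topI_sequentially)
  fix X :: "nat \<Rightarrow> real" assume X: "filterlim X at_top sequentially"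
  define Y where "Y n = max (X n) 1" for n
  have Y: "filterlim Y at_top sequentially"
    unfolding Y_def by (rule filterlim_at_top_mono[OF X]) auto
  have Y1: "Y n \<ge> 1" for n unfolding Y_def by simp
  have "(\<lambda>k. integral S (f (Y k))) \<longlonglongrightarrow> integral S g"
  proof (rule dominated_convergence(2))
    show "\<And>k. f (Y k) integrable_on S" using fi Y1 by blast
    show "h integrable_on S" by (rule hi)
    show "\<And>k x. x \<in> S \<Longrightarrow> norm (f (Y k) x) \<le> h x" using le Y1 by blast
    show "\<And>x. x \<in> S \<Longrightarrow> (\<lambda>k. f (Y k) x) \<longlonglongrightarrow> g x"
      using conv Y by (rule filterlim_compose)
  qed
  moreover have "eventually (\<lambda>n. Y n = X n) sequentially"
  proof -
    have "eventually (\<lambda>n. 1 \<le> X n) sequentially"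
      using X unfolding filterlim_at_top by blast
    then show ?thesis by eventually_elim (simp add: Y_def)
  qed
  then have "eventually (\<lambda>n. integral S (f (Y n)) = integral S (f (X n))) sequentially"
    by eventually_elim simp
  ultimately show "(\<lambda>n. integral S (f (X n))) \<longlonglongrightarrow> integral S g"
    by (rule Lim_transform_eventually)
qed

lemma lhop_part:
  fixes G :: "real \<Rightarrow> real"
  assumes G: "continuous_on {0..1} G"
  shows "((\<lambda>t. integral {t..1} (\<lambda>w. w powr (-1) * G (1 - w)) / (- ln t)) \<longlongrightarrow> G 1) (at_right 0)"
proof (rule lhopital_right_0_at_top)
  show "LIM x at_right 0. - ln (x::real) :> at_top" by real_asymp
  have ev01: "eventually (\<lambda>t. 0 < t \<and> t < 1) (at_right (0::real))"
    by (simp add: eventually_at_right_field) (auto intro: exI[of _ 1])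
  show "eventually (\<lambda>t. - inverse t \<noteq> 0) (at_right (0::real))"
    using ev01 by eventually_elim simp
  show "eventually (\<lambda>t. DERIV (\<lambda>t. - ln t) t :> - inverse t) (at_right (0::real))"
    using ev01 by eventually_elim (auto intro!: derivative_eq_intros simp: divide_inverse)
  show "eventually (\<lambda>t. DERIV (\<lambda>t. integral {t..1} (\<lambda>w. w powr (-1) * G (1 - w))) t
        :> - (t powr (-1) * G (1 - t))) (at_right (0::real))"
    using ev01
  proof eventually_elim
    case (elim t)
    have c: "continuous_on {t/2..1} (\<lambda>w. w powr (-1) * G (1 - w))"
      using elim
      by (intro continuous_intros continuous_on_compose2[OF G]) auto
    have "((\<lambda>x. integral {x..1} (\<lambda>w. w powr (-1) * G (1 - w))) has_real_derivative
          - (t powr (-1) * G (1 - t))) (at t within {t/2..1})"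
      using elim by (intro integral_has_real_derivative'[OF c]) auto
    moreover have "at t within {t/2..1} = at t" using elim by (intro at_within_Icc_at) auto
    ultimately show ?case by simp
  qed
  have "((\<lambda>t. G (1 - t)) \<longlongrightarrow> G (1 - 0)) (at_right 0)"
  proof (rule continuous_on_tendsto_compose[OF G])
    show "((\<lambda>t. 1 - t) \<longlongrightarrow> 1 - 0) (at_right (0::real))"
      by (intro tendsto_intros)
    show "1 - 0 \<in> {0..(1::real)}" by simp
    show "eventually (\<lambda>t. 1 - t \<in> {0..(1::real)}) (at_right 0)"
      using ev01 by eventually_elim auto
  qed
  then have "((\<lambda>t. G (1 - t)) \<longlongrightarrow> G 1) (at_right 0)" by simp
  then show "((\<lambda>t. - (t powr (-1) * G (1 - t)) / - inverse t) \<longlongrightarrow> G 1) (at_right 0)"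
  proof (subst tendsto_cong)
    show "eventually (\<lambda>t. - (t powr (-1) * G (1 - t)) / - inverse t = G (1 - t)) (at_right 0)"
      using ev01 by eventually_elim (simp add: powr_minus field_simps)
  qed
qed

lemma integrand_eq:
  fixes G :: "real \<Rightarrow> real" and v \<xi> \<gamma> s w :: real
  assumes v: "v > 0" and s: "s > 0" and w: "0 < w" "w \<le> 1" and x: "s + v - v / w > 0"
  shows "v * w powr (-2) * ((v + s - (s + v - v / w)) powr (-\<gamma>) * (s + v - v / w) powr (-\<xi>) *
            G ((s - (s + v - v / w)) / (v + s - (s + v - v / w))))
       = v powr (1 - \<gamma>) * s powr (-\<xi>) * (w powr (\<gamma> - 2) * ((s + v - v / w) / s) powr (-\<xi>) * G (1 - w))"
proof -
  have e1: "v + s - (s + v - v / w) = v / w" by simp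
  have e2: "(s - (s + v - v / w)) / (v + s - (s + v - v / w)) = 1 - w"
    using v w by (simp add: field_simps)
  have e3: "(v / w) powr (-\<gamma>) = v powr (-\<gamma>) * w powr \<gamma>"
    using v w by (simp add: powr_divide powr_minus field_simps)
  have e4: "(s + v - v / w) powr (-\<xi>) = s powr (-\<xi>) * ((s + v - v / w) / s) powr (-\<xi>)"
    using s x by (simp add: powr_divide)
  have e5: "v * v powr (-\<gamma>) = v powr (1 - \<gamma>)"
    using v powr_add[of v 1 "-\<gamma>"] by simp
  have e6: "w powr (-2) * w powr \<gamma> = w powr (\<gamma> - 2)"
    using w powr_add[of w "-2" "\<gamma>"] by simp
  show ?thesis
    unfolding e2 unfolding e1 e3 e4 e5[symmetric] e6[symmetric] by (simp add: algebra_simps)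
qed

lemma cont_pw:
  assumes pos: "\<And>w. w \<in> {a..1} \<Longrightarrow> w > (0::real)"
  shows "continuous_on {a..1} (\<lambda>w. w powr c)"
  by (intro continuous_on_powr' continuous_intros) (use pos in force)+

lemma cont_psi:
  fixes s v :: real
  assumes pos: "\<And>w. w \<in> {a..1} \<Longrightarrow> w > 0 \<and> (s + v - v / w) / s > 0"
  shows "continuous_on {a..1} (\<lambda>w. ((s + v - v / w) / s) powr d)"
  by (intro continuous_on_powr' continuous_intros) (use pos in force)+

lemma cont_G1:
  fixes G :: "real \<Rightarrow> real" assumes G: "continuous_on {0..1} G"
  and pos: "\<And>w. w \<in> {a..1} \<Longrightarrow> w > 0"
  shows "continuous_on {a..1} (\<lambda>w. G (1 - w))"
  by (rule continuous_on_compose2[OF G]) (use pos in \<open>force intro: continuous_intros\<close>)+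

definition Fs :: "(real \<Rightarrow> real) \<Rightarrow> real \<Rightarrow> real \<Rightarrow> real \<Rightarrow> real \<Rightarrow> real \<Rightarrow> real" where
  "Fs G v \<xi> \<gamma> s x = (v + s - x) powr (-\<gamma>) * x powr (-\<xi>) * G ((s - x) / (v + s - x))"

lemma decomp:
  fixes G :: "real \<Rightarrow> real" and v \<xi> \<gamma> s B :: real
  assumes G: "continuous_on {0..1} G" and v: "v > 0" and xi: "\<xi> < 1" and ga: "\<gamma> \<ge> 1"
    and s: "s > 0" and B: "\<And>z. z \<in> {0..1} \<Longrightarrow> \<bar>G z\<bar> \<le> B"
  shows "\<exists>R. integral {0..s} (Fs G v \<xi> \<gamma> s) = R + v powr (1 - \<gamma>) * s powr (-\<xi>) *
              integral {2 * v / (2 * v + s) .. 1} (\<lambda>w. w powr (\<gamma> - 2) * ((s + v - v / w) / s) powr (-\<xi>) * G (1 - w))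
          \<and> \<bar>R\<bar> \<le> B * (v + s/2) powr (-\<gamma>) * ((s/2) powr (1 - \<xi>) / (1 - \<xi>))"
proof -
  define F where "F = Fs G v \<xi> \<gamma> s"
  define f1 where "f1 x = (v + s - x) powr (-\<gamma>) * G ((s - x) / (v + s - x))" for x
  have Fe: "F x = f1 x * x powr (-\<xi>)" for x unfolding F_def Fs_def f1_def by (simp add: mult_ac)
  have f1c: "continuous_on {0..s} f1"
    unfolding f1_def using v
    by (intro continuous_intros continuous_on_compose2[OF G]) (auto simp: field_simps)
  have gint: "((\<lambda>x. x powr (-\<xi>)) has_integral ((s/2) powr (1 - \<xi>) / (1 - \<xi>))) {0..s/2}"
    using has_integral_powr_from_0[of "-\<xi>" "s/2"] xi s by simp
  have gabs: "(\<lambda>x. x powr (-\<xi>)) absolutely_integrable_on {0..s/2}"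
    using gint by (intro nonnegative_absolutely_integrable_1) (auto simp: has_integral_integrable)
  have f1c2: "continuous_on {0..s/2} f1" using s by (intro continuous_on_subset[OF f1c]) auto
  have "(\<lambda>x. f1 x * x powr (-\<xi>)) absolutely_integrable_on {0..s/2}"
  proof (rule absolutely_integrable_bounded_measurable_product_real)
    show "f1 \<in> borel_measurable (lebesgue_on {0..s/2})"
      using f1c2 by (intro continuous_imp_measurable_on_sets_lebesgue) auto
    show "{0..s/2} \<in> sets lebesgue" by simp
    show "bounded (f1 ` {0..s/2})"
      using f1c2 by (intro compact_imp_bounded compact_continuous_image) auto
  qed (rule gabs)
  then have Fint1: "F integrable_on {0..s/2}"
    unfolding Fe by (simp add: absolutely_integrable_on_def)
  define K0 where "K0 = B * (v + s/2) powr (-\<gamma>)"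
  have Fbound: "norm (F x) \<le> K0 * x powr (-\<xi>)" if x: "x \<in> {0..s/2}" for x
  proof -
    have z: "(s - x) / (v + s - x) \<in> {0..1}" using x v by (auto simp: field_simps)
    have p: "(v + s - x) powr (-\<gamma>) \<le> (v + s/2) powr (-\<gamma>)"
      using x v ga by (intro powr_mono2') auto
    have "norm (F x) = (v + s - x) powr (-\<gamma>) * x powr (-\<xi>) * \<bar>G ((s - x) / (v + s - x))\<bar>"
      unfolding F_def Fs_def by (simp add: abs_mult)
    also have "\<dots> \<le> (v + s/2) powr (-\<gamma>) * x powr (-\<xi>) * B"
      using p B[OF z] by (intro mult_mono) auto
    finally show ?thesis unfolding K0_def by (simp add: mult_ac)
  qed
  have Rb: "norm (integral {0..s/2} F) \<le> integral {0..s/2} (\<lambda>x. K0 * x powr (-\<xi>))"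
    using Fint1 gint Fbound by (intro integral_norm_bound_integral integrable_on_mult_right) (auto simp: has_integral_integrable)
  also have "\<dots> = K0 * ((s/2) powr (1 - \<xi>) / (1 - \<xi>))"
    using gint by (simp add: integral_unique)
  finally have Rb: "\<bar>integral {0..s/2} F\<bar> \<le> K0 * ((s/2) powr (1 - \<xi>) / (1 - \<xi>))" by simp
  define A where "A = 2 * v / (2 * v + s)"
  define g where "g w = s + v - v / w" for w
  have A: "0 < A" "A \<le> 1" unfolding A_def using v s by (auto simp: field_simps)
  have gA: "g A = s/2" unfolding g_def A_def using v s by (simp add: field_simps)
  have g1: "g 1 = s" unfolding g_def by simp
  have grange: "g w \<in> {s/2..s}" if "w \<in> {A..1}" for w
  proof -
    have w: "A \<le> w" "w \<le> 1" using that by auto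
    have "v / w \<le> v / A" using w A v by (intro divide_left_mono) auto
    moreover have "v \<le> v / w" using w A v by (simp add: field_simps)
    moreover have "v / A = v + s/2" unfolding A_def using v s by (simp add: field_simps)
    ultimately show ?thesis unfolding g_def by auto
  qed
  have Fc: "continuous_on {s/2..s} F"
    unfolding F_def Fs_def using v s
    by (intro continuous_intros continuous_on_compose2[OF G]) (auto simp: field_simps)
  have sub: "((\<lambda>w. (v * w powr (-2)) *\<^sub>R F (g w)) has_integral integral {g A..g 1} F) {A..1}"
  proof (rule has_integral_substitution[where c = "s/2" and d = s])
    show "A \<le> 1" by (rule A)
    show "g A \<le> g 1" using gA g1 s by simp
    show "g ` {A..1} \<subseteq> {s/2..s}" using grange by auto
    show "continuous_on {s/2..s} F" by (rule Fc)
    fix w assume "w \<in> {A..1}"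
    then have w: "w > 0" using A by auto
    show "(g has_field_derivative v * w powr (-2)) (at w within {A..1})"
      unfolding g_def using w
      by (auto intro!: derivative_eq_intros simp: powr_minus power2_eq_square field_simps)
  qed
  have Pint: "(F has_integral integral {g A..g 1} F) {s/2..s}"
    unfolding gA g1 using Fc by (intro integrable_integral integrable_continuous_interval)
  have "integral {g A..g 1} F = integral {A..1} (\<lambda>w. (v * w powr (-2)) *\<^sub>R F (g w))"
    using sub by (simp add: integral_unique)
  also have "\<dots> = integral {A..1} (\<lambda>w. v powr (1 - \<gamma>) * s powr (-\<xi>) *
        (w powr (\<gamma> - 2) * ((s + v - v / w) / s) powr (-\<xi>) * G (1 - w)))"
  proof (rule integral_cong)
    fix w assume w: "w \<in> {A..1}"
    have gp: "s + v - v / w > 0" using grange[OF w] s unfolding g_def by auto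
    show "(v * w powr (-2)) *\<^sub>R F (g w) = v powr (1 - \<gamma>) * s powr (-\<xi>) *
        (w powr (\<gamma> - 2) * ((s + v - v / w) / s) powr (-\<xi>) * G (1 - w))"
      unfolding F_def Fs_def g_def using integrand_eq[OF v s _ _ gp] w A by (simp add: mult.assoc)
  qed
  also have "\<dots> = v powr (1 - \<gamma>) * s powr (-\<xi>) *
        integral {A..1} (\<lambda>w. w powr (\<gamma> - 2) * ((s + v - v / w) / s) powr (-\<xi>) * G (1 - w))"
    by simp
  finally have Pe: "integral {g A..g 1} F = \<dots>" .
  have "(F has_integral (integral {0..s/2} F + integral {g A..g 1} F)) {0..s}"
    using has_integral_combine[of 0 "s/2" s F, OF _ _ integrable_integral[OF Fint1] Pint] s by simp
  then have "integral {0..s} F = integral {0..s/2} F + integral {g A..g 1} F"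
    by (simp add: integral_unique)
  then have "\<exists>R. integral {0..s} F = R + v powr (1 - \<gamma>) * s powr (-\<xi>) *
        integral {A..1} (\<lambda>w. w powr (\<gamma> - 2) * ((s + v - v / w) / s) powr (-\<xi>) * G (1 - w))
      \<and> \<bar>R\<bar> \<le> K0 * ((s/2) powr (1 - \<xi>) / (1 - \<xi>))"
    using Rb Pe by (intro exI[of _ "integral {0..s/2} F"]) auto
  then show ?thesis unfolding F_def A_def K0_def by simp
qed

lemma grange:
  fixes v s w :: real
  assumes v: "v > 0" and s: "s > 0" and w: "2 * v / (2 * v + s) \<le> w" "w \<le> 1"
  shows "s/2 \<le> s + v - v / w" "s + v - v / w \<le> s" "w > 0"
proof -
  define A where "A = 2 * v / (2 * v + s)"
  have A: "A > 0" unfolding A_def using v s by simp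
  have w': "A \<le> w" using w unfolding A_def by simp
  have "v / w \<le> v / A" using w' A v by (intro divide_left_mono) auto
  moreover have "v \<le> v / w" using w' w A v by (simp add: field_simps)
  moreover have "v / A = v + s/2" unfolding A_def using v s by (simp add: field_simps)
  ultimately show "s/2 \<le> s + v - v / w" "s + v - v / w \<le> s" by auto
  show "w > 0" using A w' by simp
qed

lemma reflect01:
  fixes g :: "real \<Rightarrow> real"
  assumes "g integrable_on {0..1}"
  shows "integral {0..1} (\<lambda>z. g (1 - z)) = integral {0..1} g"
proof -
  have "(g has_integral integral {0..1} g) (cbox 0 1)"
    using assms by (simp add: integrable_integral)
  from has_integral_affinity[OF this, of "-1" 1]
  have "((\<lambda>x. g (1 - x)) has_integral integral {0..1} g) ((\<lambda>x. 1 - x) ` cbox 0 1)"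
    by simp
  moreover have "(\<lambda>x. 1 - x) ` cbox 0 1 = {0..(1::real)}"
  proof -
    have "x \<in> (\<lambda>x. 1 - x) ` {0..1}" if "x \<in> {0..1}" for x :: real
      using that by (intro image_eqI[of _ _ "1 - x"]) auto
    then show ?thesis by auto
  qed
  ultimately show ?thesis by (simp add: integral_unique)
qed

lemma limit_gt1:
  fixes G :: "real \<Rightarrow> real" and v \<xi> \<gamma> B :: real
  assumes G: "continuous_on {0..1} G" and v: "v > 0" and xi: "\<xi> < 1" and ga: "\<gamma> > 1"
    and B: "\<And>z. z \<in> {0..1} \<Longrightarrow> \<bar>G z\<bar> \<le> B"
  shows "((\<lambda>s. integral {2 * v / (2 * v + s) .. 1}
            (\<lambda>w. w powr (\<gamma> - 2) * ((s + v - v / w) / s) powr (-\<xi>) * G (1 - w)))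
          \<longlongrightarrow> integral {0..1} (\<lambda>z. (1 - z) powr (\<gamma> - 2) * G z)) at_top"
proof -
  define A where "A s = 2 * v / (2 * v + s)" for s
  define k where "k s w = w powr (\<gamma> - 2) * ((s + v - v / w) / s) powr (-\<xi>) * G (1 - w)" for s w
  define f where "f s w = (if w \<in> {A s..} then k s w else 0)" for s w
  define g where "g w = w powr (\<gamma> - 2) * G (1 - w)" for w
  define h where "h w = 2 * B * w powr (\<gamma> - 2)" for w
  have B0: "B \<ge> 0" using B[of 0] by auto
  have Apos: "A s > 0" if "s \<ge> 1" for s unfolding A_def using v that by simp
  have A1: "A s \<le> 1" if "s \<ge> 1" for s unfolding A_def using v that by (simp add: field_simps)
  have fint: "integral {0..1} (f s) = integral {A s..1} (k s)" if "s \<ge> 1" for s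
  proof -
    have "integral {0..1} (f s) = integral ({A s..} \<inter> {0..1}) (k s)"
      unfolding f_def by (rule integral_restrict_Int)
    also have "{A s..} \<inter> {0..1} = {A s..1}" using Apos[OF that] by auto
    finally show ?thesis .
  qed
  have kpos: "w > 0 \<and> (s + v - v / w) / s > 0" if s: "s \<ge> 1" and w: "w \<in> {A s..1}" for s w
  proof -
    have "s/2 \<le> s + v - v / w" "w > 0" using grange[OF v, of s w] s w unfolding A_def by auto
    then show ?thesis using s by auto
  qed
  have kc: "continuous_on {A s..1} (k s)" if s: "s \<ge> 1" for s
  proof -
    have "continuous_on {A s..1} (\<lambda>w. w powr (\<gamma> - 2) * ((s + v - v / w) / s) powr (-\<xi>) * G (1 - w))"
      using kpos[OF s]
      by (intro continuous_on_mult cont_pw cont_psi cont_G1[OF G]) auto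
    then show ?thesis unfolding k_def .
  qed
  have "((\<lambda>s. integral {0..1} (f s)) \<longlongrightarrow> integral {0..1} g) at_top"
  proof (rule dct_at_top)
    fix s :: real assume s: "s \<ge> 1"
    show "f s integrable_on {0..1}"
      unfolding f_def integrable_restrict_Int
      using kc[OF s] Apos[OF s] by (simp add: Int_commute integrable_continuous_interval
           flip: atLeastAtMost_def[of "A s" 1])
  next
    show "h integrable_on {0..1}"
      unfolding h_def using has_integral_powr_from_0[of "\<gamma> - 2" 1] ga
      by (intro integrable_on_mult_right) (auto simp: has_integral_integrable)
  next
    fix s w :: real assume s: "s \<ge> 1" and w: "w \<in> {0..1}"
    show "norm (f s w) \<le> h w"
    proof (cases "A s \<le> w")
      case True
      note gr = grange[OF v _ True[unfolded A_def]] 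
      have y: "1/2 \<le> (s + v - v / w) / s" "(s + v - v / w) / s \<le> 1"
        using gr s w by (auto simp: field_simps)
      have "norm (f s w) = w powr (\<gamma> - 2) * ((s + v - v / w) / s) powr (-\<xi>) * \<bar>G (1 - w)\<bar>"
        using True unfolding f_def k_def by (simp add: abs_mult)
      also have "\<dots> \<le> w powr (\<gamma> - 2) * 2 * B"
        using psi_le2[OF y xi] B[of "1 - w"] w
        by (intro mult_mono) (auto intro: mult_left_mono)
      finally show ?thesis unfolding h_def by (simp add: mult_ac)
    next
      case False
      then show ?thesis unfolding f_def h_def using B0 by simp
    qed
  next
    fix w :: real assume w: "w \<in> {0..1}"
    show "((\<lambda>s. f s w) \<longlongrightarrow> g w) at_top"
    proof (cases "w = 0")
      case True
      have "eventually (\<lambda>s. f s w = g w) at_top"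
        using eventually_ge_at_top[of 1]
      proof eventually_elim
        case (elim s)
        then have "A s > 0" by (rule Apos)
        then show ?case using True by (simp add: f_def g_def)
      qed
      then show ?thesis by (rule tendsto_eventually)
    next
      case False
      then have wp: "w > 0" using w by simp
      have "(A \<longlongrightarrow> 0) at_top" unfolding A_def by real_asymp
      then have evA: "eventually (\<lambda>s. A s < w) at_top" using wp by (rule order_tendstoD)
      have "((\<lambda>s. (s + v - v / w) / s) \<longlongrightarrow> 1) at_top" by real_asymp
      then have "((\<lambda>s. k s w) \<longlongrightarrow> w powr (\<gamma> - 2) * 1 powr (-\<xi>) * G (1 - w)) at_top"
        unfolding k_def by (intro tendsto_intros) auto
      then have "((\<lambda>s. k s w) \<longlongrightarrow> g w) at_top" unfolding g_def by simp
      moreover have "eventually (\<lambda>s. k s w = f s w) at_top"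
        using evA by eventually_elim (auto simp: f_def)
      ultimately show ?thesis by (rule Lim_transform_eventually)
    qed
  qed
  moreover have "eventually (\<lambda>s. integral {0..1} (f s) = integral {2 * v / (2 * v + s) .. 1}
            (\<lambda>w. w powr (\<gamma> - 2) * ((s + v - v / w) / s) powr (-\<xi>) * G (1 - w))) at_top"
    using eventually_ge_at_top[of 1] by eventually_elim (simp add: fint A_def k_def[abs_def])
  moreover have "integral {0..1} g = integral {0..1} (\<lambda>z. (1 - z) powr (\<gamma> - 2) * G z)"
  proof -
    have pint: "((\<lambda>w. w powr (\<gamma> - 2)) has_integral (1 powr (\<gamma> - 2 + 1) / (\<gamma> - 2 + 1))) {0..1}"
      using has_integral_powr_from_0[of "\<gamma> - 2" 1] ga by simp
    have Gc: "continuous_on {0..1} (\<lambda>w. G (1 - w))"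
      by (intro continuous_on_compose2[OF G] continuous_intros) auto
    have "(\<lambda>w. G (1 - w) * w powr (\<gamma> - 2)) absolutely_integrable_on {0..1}"
    proof (rule absolutely_integrable_bounded_measurable_product_real)
      show "(\<lambda>w. G (1 - w)) \<in> borel_measurable (lebesgue_on {0..1})"
        using Gc by (intro continuous_imp_measurable_on_sets_lebesgue) auto
      show "{0..1::real} \<in> sets lebesgue" by simp
      show "bounded ((\<lambda>w. G (1 - w)) ` {0..1})"
        using Gc by (intro compact_imp_bounded compact_continuous_image) auto
      show "(\<lambda>w. w powr (\<gamma> - 2)) absolutely_integrable_on {0..1::real}"
        using pint by (intro nonnegative_absolutely_integrable_1) (auto simp: has_integral_integrable)
    qed
    then have gi: "g integrable_on {0..1}"
      unfolding g_def by (simp add: absolutely_integrable_on_def mult.commute)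
    show ?thesis using reflect01[OF gi] unfolding g_def by simp
  qed
  ultimately show ?thesis by (simp add: tendsto_cong)
qed

lemma limit_eq1:
  fixes G :: "real \<Rightarrow> real" and v \<xi> B :: real
  assumes G: "continuous_on {0..1} G" and v: "v > 0" and xi: "\<xi> < 1"
    and B: "\<And>z. z \<in> {0..1} \<Longrightarrow> \<bar>G z\<bar> \<le> B"
  shows "((\<lambda>s. integral {2 * v / (2 * v + s) .. 1}
            (\<lambda>w. w powr (-1) * ((s + v - v / w) / s) powr (-\<xi>) * G (1 - w)) / ln s)
          \<longlongrightarrow> G 1) at_top"
proof -
  define A where "A s = 2 * v / (2 * v + s)" for s
  define M where "M t = integral {t..1} (\<lambda>w. w powr (-1) * G (1 - w))" for t
  define E where "E s = integral {A s..1} (\<lambda>w. w powr (-1) * (((s + v - v / w) / s) powr (-\<xi>) - 1) * G (1 - w))" for s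
  define C where "C = 4 * \<bar>\<xi>\<bar> * B * (v + 1)"
  have B0: "B \<ge> 0" using B[of 0] by auto
  have Apos: "A s > 0" if "s \<ge> 1" for s unfolding A_def using v that by simp
  have A1: "A s \<le> 1" if "s \<ge> 1" for s unfolding A_def using v that by (simp add: field_simps)
  have kpos: "w > 0 \<and> (s + v - v / w) / s > 0" if s: "s \<ge> 1" and w: "w \<in> {A s..1}" for s w
  proof -
    have "s/2 \<le> s + v - v / w" "w > 0" using grange[OF v, of s w] s w unfolding A_def by auto
    then show ?thesis using s by auto
  qed
  have split: "integral {A s..1} (\<lambda>w. w powr (-1) * ((s + v - v / w) / s) powr (-\<xi>) * G (1 - w))
      = M (A s) + E s" if s: "s \<ge> 1" for s
  proof -
    have c1: "continuous_on {A s..1} (\<lambda>w. w powr (-1) * ((s + v - v / w) / s) powr (-\<xi>) * G (1 - w))"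
      using kpos[OF s] by (intro continuous_on_mult cont_pw cont_psi cont_G1[OF G]) auto

    have c2: "continuous_on {A s..1} (\<lambda>w. w powr (-1) * G (1 - w))"
      using kpos[OF s] by (intro continuous_on_mult cont_pw cont_G1[OF G]) auto

    have "integral {A s..1} (\<lambda>w. w powr (-1) * ((s + v - v / w) / s) powr (-\<xi>) * G (1 - w))
        - integral {A s..1} (\<lambda>w. w powr (-1) * G (1 - w))
      = integral {A s..1} (\<lambda>w. w powr (-1) * ((s + v - v / w) / s) powr (-\<xi>) * G (1 - w)
          - w powr (-1) * G (1 - w))"
      by (rule integral_diff[symmetric]) (intro integrable_continuous_interval c1 c2)+
    also have "\<dots> = E s" unfolding E_def
      by (rule integral_cong) (simp add: algebra_simps)
    finally have "E s = integral {A s..1} (\<lambda>w. w powr (-1) * ((s + v - v / w) / s) powr (-\<xi>) * G (1 - w))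
              - M (A s)" unfolding M_def by simp
    then show ?thesis by simp
  qed
  have Ebound: "\<bar>E s\<bar> \<le> C" if s: "s \<ge> 1" for s
  proof -
    have fi: "((\<lambda>w. 1 / w^2) has_integral (1 / A s - 1)) {A s..1}"
    proof -
      have "((\<lambda>w. 1 / w^2) has_integral ((- 1 / 1) - (- 1 / A s))) {A s..1}"
      proof (rule fundamental_theorem_of_calculus)
        show "A s \<le> 1" using A1[OF s] .
        fix w assume "w \<in> {A s..1}"
        then have w: "w > 0" using Apos[OF s] by auto
        show "((\<lambda>w. - 1 / w) has_vector_derivative 1 / w^2) (at w within {A s..1})"
          unfolding has_real_derivative_iff_has_vector_derivative[symmetric] using w
          by (auto intro!: derivative_eq_intros simp: power2_eq_square field_simps)
      qed
      then show ?thesis by simp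
    qed
    have c1: "continuous_on {A s..1} (\<lambda>w. w powr (-1) * (((s + v - v / w) / s) powr (-\<xi>) - 1) * G (1 - w))"
      using kpos[OF s] by (intro continuous_on_mult continuous_on_diff continuous_on_const cont_pw cont_psi cont_G1[OF G]) auto

    have le: "norm (w powr (-1) * (((s + v - v / w) / s) powr (-\<xi>) - 1) * G (1 - w))
          \<le> (4 * \<bar>\<xi>\<bar> * B * v / s) * (1 / w^2)" if w: "w \<in> {A s..1}" for w
    proof -
      note gr = grange[OF v _ w[unfolded A_def atLeastAtMost_iff, THEN conjunct1]]
      have wp: "w > 0" "w \<le> 1" using gr s w by auto
      have y: "1/2 \<le> (s + v - v / w) / s" "(s + v - v / w) / s \<le> 1"
        using gr s w by (auto simp: field_simps)
      have l: "\<bar>((s + v - v / w) / s) powr (-\<xi>) - 1\<bar> \<le> 4 * \<bar>\<xi>\<bar> * (1 - (s + v - v / w) / s)"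
        by (rule psi_lip[OF y xi])
      have e: "1 - (s + v - v / w) / s = (v / w - v) / s" using s by (simp add: field_simps)
      have e2: "(v / w - v) / s \<le> v / (w * s)" using v wp s by (simp add: field_simps)
      have l2: "\<bar>((s + v - v / w) / s) powr (-\<xi>) - 1\<bar> \<le> 4 * \<bar>\<xi>\<bar> * (v / (w * s))"
      proof -
        have "4 * \<bar>\<xi>\<bar> * (1 - (s + v - v / w) / s) \<le> 4 * \<bar>\<xi>\<bar> * (v / (w * s))"
          unfolding e using e2 by (intro mult_left_mono) auto
        then show ?thesis using l by linarith
      qed
      have nn: "0 \<le> 4 * \<bar>\<xi>\<bar> * (v / (w * s))" using v wp s by auto
      have "norm (w powr (-1) * (((s + v - v / w) / s) powr (-\<xi>) - 1) * G (1 - w))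
          = (1 / w) * \<bar>((s + v - v / w) / s) powr (-\<xi>) - 1\<bar> * \<bar>G (1 - w)\<bar>"
        using wp by (simp add: abs_mult powr_minus divide_inverse)
      also have "\<dots> \<le> (1 / w) * (4 * \<bar>\<xi>\<bar> * (v / (w * s))) * B"
        using l2 nn B[of "1 - w"] wp v s
        by (intro mult_mono mult_left_mono) auto
      also have "\<dots> = (4 * \<bar>\<xi>\<bar> * B * v / s) * (1 / w^2)"
        using wp s by (simp add: field_simps power2_eq_square)
      finally show ?thesis .
    qed
    have "norm (E s) \<le> integral {A s..1} (\<lambda>w. (4 * \<bar>\<xi>\<bar> * B * v / s) * (1 / w^2))"
      unfolding E_def
    proof (rule integral_norm_bound_integral)
      show "(\<lambda>w. w powr (-1) * (((s + v - v / w) / s) powr (-\<xi>) - 1) * G (1 - w)) integrable_on {A s..1}"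
        by (rule integrable_continuous_interval[OF c1])
      show "(\<lambda>w. (4 * \<bar>\<xi>\<bar> * B * v / s) * (1 / w^2)) integrable_on {A s..1}"
        using fi by (intro integrable_on_mult_right) (auto simp: has_integral_integrable)
    qed (rule le)
    also have "\<dots> = (4 * \<bar>\<xi>\<bar> * B * v / s) * (1 / A s - 1)"
      by (rule integral_unique[OF has_integral_mult_right[OF fi]])
    also have "\<dots> \<le> (4 * \<bar>\<xi>\<bar> * B * v / s) * ((2 * v + s) / (2 * v))"
      using B0 s v Apos[OF s] unfolding A_def by (intro mult_left_mono) auto
    also have "\<dots> = 4 * \<bar>\<xi>\<bar> * B * (1/2 + v / s)"
      using s v by (simp add: field_simps)
    also have "\<dots> \<le> C"
    proof -
      have "v / s \<le> v / 1" using s v by (intro divide_left_mono) auto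
      then have "1/2 + v / s \<le> v + 1" by simp
      then show ?thesis unfolding C_def using B0 by (intro mult_left_mono) auto
    qed
    finally show ?thesis by simp
  qed
  have lim1: "((\<lambda>s. M (A s) / (- ln (A s))) \<longlongrightarrow> G 1) at_top"
  proof -
    have fA: "filterlim A (at_right 0) at_top" unfolding A_def using v by real_asymp
    show ?thesis
      using filterlim_compose[OF lhop_part[OF G] fA] unfolding M_def by simp
  qed
  have lim2: "((\<lambda>s. - ln (A s) / ln s) \<longlongrightarrow> 1) at_top"
    unfolding A_def using v by real_asymp
  have lim3: "((\<lambda>s. E s / ln s) \<longlongrightarrow> 0) at_top"
  proof (rule Lim_null_comparison)
    show "eventually (\<lambda>s. norm (E s / ln s) \<le> C / ln s) at_top"
      using eventually_ge_at_top[of 3]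
    proof eventually_elim
      case (elim s)
      have "ln s > 0" using elim by simp
      then show ?case using Ebound[of s] elim by (simp add: divide_right_mono)
    qed
    show "((\<lambda>s. C / ln s) \<longlongrightarrow> 0) at_top" by real_asymp
  qed
  have "((\<lambda>s. M (A s) / (- ln (A s)) * (- ln (A s) / ln s) + E s / ln s) \<longlongrightarrow> G 1 * 1 + 0) at_top"
    by (intro tendsto_intros lim1 lim2 lim3)
  moreover have "eventually (\<lambda>s. M (A s) / (- ln (A s)) * (- ln (A s) / ln s) + E s / ln s =
      integral {2 * v / (2 * v + s) .. 1}
            (\<lambda>w. w powr (-1) * ((s + v - v / w) / s) powr (-\<xi>) * G (1 - w)) / ln s) at_top"
    using eventually_ge_at_top[of 3]
  proof eventually_elim
    case (elim s)
    have "A s < 1" unfolding A_def using v elim by (simp add: field_simps)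
    then have "ln (A s) \<noteq> 0" using Apos[of s] elim by simp
    then show ?case using split[of s] elim unfolding A_def by (simp add: field_simps)
  qed
  ultimately show ?thesis by (simp add: tendsto_cong)
qed

theorem lemma2:
  fixes G :: "real \<Rightarrow> real" and v \<xi> \<gamma> :: real
  assumes "continuous_on {0..1} G"
    and "v > 0" and "\<xi> < 1" and "\<gamma> \<ge> 1"
  shows "(\<gamma> > 1 \<longrightarrow> integral {0..1} (\<lambda>z. (1 - z) powr (\<gamma> - 2) * G z) \<noteq> 0 \<longrightarrow>
            ((\<lambda>s. Jfun G v \<xi> \<gamma> s /
                  (s powr (-\<xi>) * v powr (1 - \<gamma>) * integral {0..1} (\<lambda>z. (1 - z) powr (\<gamma> - 2) * G z)))
              \<longlongrightarrow> 1) at_top)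
       \<and> (\<gamma> = 1 \<longrightarrow> G 1 \<noteq> 0 \<longrightarrow>
            ((\<lambda>s. Jfun G v \<xi> \<gamma> s / (s powr (-\<xi>) * ln s * G 1)) \<longlongrightarrow> 1) at_top)"
proof -
  note G = assms(1) and v = assms(2) and xi = assms(3) and ga = assms(4)
  have "bounded (G ` {0..1})" using G by (intro compact_imp_bounded compact_continuous_image) auto
  then obtain B where B: "\<And>z. z \<in> {0..1} \<Longrightarrow> \<bar>G z\<bar> \<le> B"
    unfolding bounded_iff by (metis image_eqI real_norm_def)
  have B0: "B \<ge> 0" using B[of 0] by auto
  define T where "T s = integral {2 * v / (2 * v + s) .. 1}
      (\<lambda>w. w powr (\<gamma> - 2) * ((s + v - v / w) / s) powr (-\<xi>) * G (1 - w))" for s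
  define Rr where "Rr s = Jfun G v \<xi> \<gamma> s - v powr (1 - \<gamma>) * s powr (-\<xi>) * T s" for s
  define C where "C = B * 2 powr \<gamma> / (1 - \<xi>)"
  have Jeq: "Jfun G v \<xi> \<gamma> s * s powr \<xi> = Rr s * s powr \<xi> + v powr (1 - \<gamma>) * T s"
    if s: "s > 0" for s
  proof -
    have "s powr (-\<xi>) * s powr \<xi> = 1" using s by (simp add: powr_minus)
    then show ?thesis unfolding Rr_def by (simp add: algebra_simps)
  qed
  have Rb: "\<bar>Rr s * s powr \<xi>\<bar> \<le> C * s powr (1 - \<gamma>)" if s: "s \<ge> 1" for s
  proof -
    have sp: "s > 0" using s by simp
    obtain R where R: "integral {0..s} (Fs G v \<xi> \<gamma> s) = R + v powr (1 - \<gamma>) * s powr (-\<xi>) * T s"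
        "\<bar>R\<bar> \<le> B * (v + s/2) powr (-\<gamma>) * ((s/2) powr (1 - \<xi>) / (1 - \<xi>))"
      using decomp[OF G v xi ga sp B] unfolding T_def by blast
    have "Rr s = R" using R(1) unfolding Rr_def Jfun_def Fs_def by simp
    have p1: "(v + s/2) powr (-\<gamma>) \<le> (s/2) powr (-\<gamma>)"
      using v sp ga by (intro powr_mono2') auto
    have p2: "(s/2) powr (-\<gamma>) = 2 powr \<gamma> * s powr (-\<gamma>)"
      using sp by (simp add: powr_divide powr_minus field_simps)
    have p3: "(s/2) powr (1 - \<xi>) \<le> s powr (1 - \<xi>)"
      using sp xi by (intro powr_mono2) auto
    have p4: "s powr (-\<gamma>) * s powr (1 - \<xi>) * s powr \<xi> = s powr (1 - \<gamma>)"
      using sp by (simp add: powr_add[symmetric])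
    have "\<bar>Rr s * s powr \<xi>\<bar> = \<bar>R\<bar> * s powr \<xi>" using \<open>Rr s = R\<close> by (simp add: abs_mult)
    also have "\<dots> \<le> B * (v + s/2) powr (-\<gamma>) * ((s/2) powr (1 - \<xi>) / (1 - \<xi>)) * s powr \<xi>"
      using R(2) by (intro mult_right_mono) auto
    also have "\<dots> \<le> B * (2 powr \<gamma> * s powr (-\<gamma>)) * (s powr (1 - \<xi>) / (1 - \<xi>)) * s powr \<xi>"
      using p1 p2 p3 B0 xi
      by (intro mult_right_mono mult_mono mult_left_mono divide_right_mono) auto
    also have "\<dots> = C * (s powr (-\<gamma>) * s powr (1 - \<xi>) * s powr \<xi>)"
      unfolding C_def by (simp add: field_simps)
    also have "\<dots> = C * s powr (1 - \<gamma>)" using p4 by simp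
    finally show ?thesis .
  qed
  have ev1: "eventually (\<lambda>s. s \<ge> (1::real)) at_top" by (rule eventually_ge_at_top)
  show ?thesis
  proof (intro conjI impI)
    assume g1: "\<gamma> > 1"
    define I where "I = integral {0..1} (\<lambda>z. (1 - z) powr (\<gamma> - 2) * G z)"
    assume I0: "integral {0..1} (\<lambda>z. (1 - z) powr (\<gamma> - 2) * G z) \<noteq> 0"
    have lR: "((\<lambda>s. Rr s * s powr \<xi>) \<longlongrightarrow> 0) at_top"
    proof (rule Lim_null_comparison)
      show "eventually (\<lambda>s. norm (Rr s * s powr \<xi>) \<le> C * s powr (1 - \<gamma>)) at_top"
        using ev1 by eventually_elim (use Rb in auto)
      have "((\<lambda>s. s powr (1 - \<gamma>)) \<longlongrightarrow> 0) at_top"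
        using g1 by (intro tendsto_neg_powr filterlim_ident) auto
      then show "((\<lambda>s. C * s powr (1 - \<gamma>)) \<longlongrightarrow> 0) at_top"
        using tendsto_mult_left[of _ 0 _ C] by simp
    qed
    have lT: "(T \<longlongrightarrow> I) at_top"
      unfolding T_def I_def by (rule limit_gt1[OF G v xi g1 B])
    have "((\<lambda>s. (Rr s * s powr \<xi> + v powr (1 - \<gamma>) * T s) / (v powr (1 - \<gamma>) * I))
        \<longlongrightarrow> (0 + v powr (1 - \<gamma>) * I) / (v powr (1 - \<gamma>) * I)) at_top"
      using I0 v unfolding I_def[symmetric] by (intro tendsto_intros lR lT) auto
    then have "((\<lambda>s. (Rr s * s powr \<xi> + v powr (1 - \<gamma>) * T s) / (v powr (1 - \<gamma>) * I)) \<longlongrightarrow> 1) at_top"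
      using I0 v unfolding I_def[symmetric] by simp
    moreover have "eventually (\<lambda>s. (Rr s * s powr \<xi> + v powr (1 - \<gamma>) * T s) / (v powr (1 - \<gamma>) * I)
        = Jfun G v \<xi> \<gamma> s / (s powr (-\<xi>) * v powr (1 - \<gamma>) * I)) at_top"
      using ev1
    proof eventually_elim
      case (elim s)
      then have sp: "s > 0" by simp
      have e: "s powr (-\<xi>) = 1 / s powr \<xi>" by (simp add: powr_minus_divide)
      have nz: "s powr \<xi> \<noteq> 0" using sp by simp
      show ?case unfolding e Jeq[OF sp, symmetric] using nz by (simp add: field_simps)
    qed
    ultimately show "((\<lambda>s. Jfun G v \<xi> \<gamma> s /
                  (s powr (-\<xi>) * v powr (1 - \<gamma>) * integral {0..1} (\<lambda>z. (1 - z) powr (\<gamma> - 2) * G z)))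
              \<longlongrightarrow> 1) at_top"
      unfolding I_def by (simp add: tendsto_cong)
  next
    assume g1: "\<gamma> = 1" and G1: "G 1 \<noteq> 0"
    have lR: "((\<lambda>s. Rr s * s powr \<xi> / ln s) \<longlongrightarrow> 0) at_top"
    proof (rule Lim_null_comparison)
      show "eventually (\<lambda>s. norm (Rr s * s powr \<xi> / ln s) \<le> C / ln s) at_top"
        using eventually_ge_at_top[of 3]
      proof eventually_elim
        case (elim s)
        have "ln s > 0" using elim by simp
        then show ?case using Rb[of s] elim g1 by (simp add: divide_right_mono)
      qed
      show "((\<lambda>s. C / ln s) \<longlongrightarrow> 0) at_top" by real_asymp
    qed
    have lT: "((\<lambda>s. T s / ln s) \<longlongrightarrow> G 1) at_top"
      unfolding T_def g1 using limit_eq1[OF G v xi B] by simp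
    have "((\<lambda>s. (Rr s * s powr \<xi> / ln s + T s / ln s) / G 1) \<longlongrightarrow> (0 + G 1) / G 1) at_top"
      using G1 by (intro tendsto_intros lR lT) auto
    then have "((\<lambda>s. (Rr s * s powr \<xi> / ln s + T s / ln s) / G 1) \<longlongrightarrow> 1) at_top"
      using G1 by simp
    moreover have "eventually (\<lambda>s. (Rr s * s powr \<xi> / ln s + T s / ln s) / G 1
        = Jfun G v \<xi> \<gamma> s / (s powr (-\<xi>) * ln s * G 1)) at_top"
      using eventually_ge_at_top[of 3]
    proof eventually_elim
      case (elim s)
      then have sp: "s > 0" by simp
      have l: "ln s > 0" using elim by simp
      have e: "s powr (-\<xi>) = 1 / s powr \<xi>" by (simp add: powr_minus_divide)
      have nz: "s powr \<xi> \<noteq> 0" using sp by simp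
      have "(Rr s * s powr \<xi> / ln s + T s / ln s) = (Rr s * s powr \<xi> + v powr (1 - \<gamma>) * T s) / ln s"
        using g1 v by (simp add: add_divide_distrib)
      then show ?case unfolding e Jeq[OF sp, symmetric] using nz l G1 by (simp add: field_simps)
    qed
    ultimately show "((\<lambda>s. Jfun G v \<xi> \<gamma> s / (s powr (-\<xi>) * ln s * G 1)) \<longlongrightarrow> 1) at_top"
      by (simp add: tendsto_cong)
  qed
qed

end
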